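(* Let $\mathcal{A}$ be a weighted pushdown system with state set $Q$ and stack alphabet $\Gamma$, let $c_1,c_2$ be configurations and $n\in\mathbb{Z}$. Suppose there is a path from $c_1$ to $c_2$ of total weight at least $n$, and let $d\in\mathbb{N}$ be the minimum additional stack height among all paths from $c_1$ to $c_2$ with total weight at least $n$. If $d\geq(|Q|\cdot|\Gamma|)^2$, then there is a path $\pi^*$ from $c_1$ to $c_2$ with additional stack height $d$ that has a pumpable pair $(p_1,p_2)$ with $w(p_1)+w(p_2)>0$.
   Context: A weighted pushdown system (WPS) is $\mathcal{A}=\langle Q,\Gamma,q_0,E,w\rangle$ with finite state set $Q$, initial state $q_0$, finite stack alphabet $\Gamma$ containing a bottom symbol $\bot$ that can be neither pushed nor popped, edges $E\subseteq(Q\times\Gamma)\times(Q\times\mathrm{Com}(\Gamma))$ where $\mathrm{Com}(\Gamma)=\{\mathit{skip},\mathit{pop}\}\cup\{\mathit{push}(z):z\in\Gamma\}$, and weights $w:E\to\mathbb{Z}$. Configurations are $(\alpha,q)$ with $\alpha\in\Gamma^+$, $q\in Q$; $(\alpha',q')$ is a successor of $(\alpha,q)$ if some edge $(q,\gamma,q',\mathit{com})$ has $\gamma$ the top of $\alpha$ and $\alpha'=\mathit{com}(\alpha)$. A path is a sequence of successive configurations (equivalently a start configuration plus a sequence of edges); its weight $w(\pi)$ is the sum of the weights of its edges. For a finite path with stacks $\alpha_1,\dots,\alpha_n$, $\mathrm{ASH}(\pi)=\max_i|\alpha_i|-\max\{|\alpha_1|,|\alpha_n|\}$. A pumpable pair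 of a path $\pi=\langle c_1e_1e_2\dots\rangle$ is a pair of nonempty disjoint blocks of consecutive edges $p_1$ (earlier) and $p_2$ (later) such that for every $j\ge 0$, repeating $p_1$ and $p_2$ each exactly $j$ times (in place) yields a valid path from $c_1$; $w(p_i)$ is the sum of weights of the edges of $p_i$. *)

theory Defs
  imports Main
begin

datatype 'g scom = Skip | Pop | Push 'g

type_synonym ('q, 'g) edge = "('q \<times> 'g) \<times> ('q \<times> 'g scom)"

text \<open>Configurations (alpha, q); the stack is a list whose head is the top symbol.\<close>
type_synonym ('q, 'g) config = "'g list \<times> 'q"

record ('q, 'g) wps =
  states :: "'q set"
  alphabet :: "'g set"
  init :: 'q
  bottom :: 'g
  edges :: "('q, 'g) edge set"
  weight :: "('q, 'g) edge \<Rightarrow> int"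

fun com_ok :: "'g set \<Rightarrow> 'g scom \<Rightarrow> bool" where
  "com_ok G Skip = True"
| "com_ok G Pop = True"
| "com_ok G (Push z) = (z \<in> G)"

definition is_wps :: "('q, 'g) wps \<Rightarrow> bool" where
  "is_wps A \<longleftrightarrow>
     finite (states A) \<and> finite (alphabet A) \<and> init A \<in> states A \<and>
     bottom A \<in> alphabet A \<and>
     (\<forall>((q, g), (q', c)) \<in> edges A.
        q \<in> states A \<and> g \<in> alphabet A \<and> q' \<in> states A \<and> com_ok (alphabet A) c \<and>
        c \<noteq> Push (bottom A) \<and> \<not> (g = bottom A \<and> c = Pop))"

fun apply_com :: "'g scom \<Rightarrow> 'g list \<Rightarrow> 'g list" where
  "apply_com Skip \<alpha> = \<alpha>"
| "apply_com Pop \<alpha> = tl \<alpha>"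
| "apply_com (Push z) \<alpha> = z # \<alpha>"

definition is_config :: "('q, 'g) wps \<Rightarrow> ('q, 'g) config \<Rightarrow> bool" where
  "is_config A c \<longleftrightarrow> fst c \<noteq> [] \<and> set (fst c) \<subseteq> alphabet A \<and> snd c \<in> states A"

definition step :: "('q, 'g) wps \<Rightarrow> ('q, 'g) edge \<Rightarrow> ('q, 'g) config \<Rightarrow> ('q, 'g) config option" where
  "step A e c =
     (let ((q, g), (q', cm)) = e; (\<alpha>, p) = c in
      if e \<in> edges A \<and> p = q \<and> \<alpha> \<noteq> [] \<and> hd \<alpha> = g \<and> is_config A (apply_com cm \<alpha>, q')
      then Some (apply_com cm \<alpha>, q') else None)"

fun run :: "('q, 'g) wps \<Rightarrow> ('q, 'g) config \<Rightarrow> ('q, 'g) edge list \<Rightarrow> ('q, 'g) config list option" where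
  "run A c [] = Some [c]"
| "run A c (e # es) =
     (case step A e c of None \<Rightarrow> None
      | Some c' \<Rightarrow> (case run A c' es of None \<Rightarrow> None | Some cs \<Rightarrow> Some (c # cs)))"

definition is_path :: "('q, 'g) wps \<Rightarrow> ('q, 'g) config \<Rightarrow> ('q, 'g) edge list \<Rightarrow> bool" where
  "is_path A c es \<longleftrightarrow> is_config A c \<and> run A c es \<noteq> None"

definition path_from_to ::
  "('q, 'g) wps \<Rightarrow> ('q, 'g) config \<Rightarrow> ('q, 'g) edge list \<Rightarrow> ('q, 'g) config \<Rightarrow> bool" where
  "path_from_to A c1 es c2 \<longleftrightarrow> is_path A c1 es \<and> last (the (run A c1 es)) = c2"

definition path_weight :: "('q, 'g) wps \<Rightarrow> ('q, 'g) edge list \<Rightarrow> int" where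
  "path_weight A es = sum_list (map (weight A) es)"

definition ASH :: "('q, 'g) wps \<Rightarrow> ('q, 'g) config \<Rightarrow> ('q, 'g) edge list \<Rightarrow> nat" where
  "ASH A c es =
     (let cs = the (run A c es); hs = map (\<lambda>c. length (fst c)) cs in
      Max (set hs) - max (hd hs) (last hs))"

definition pump :: "'e list \<Rightarrow> nat \<Rightarrow> nat \<Rightarrow> nat \<Rightarrow> nat \<Rightarrow> nat \<Rightarrow> 'e list" where
  "pump es i k1 j k2 m =
     take i es @ concat (replicate m (take k1 (drop i es)))
     @ take (j - (i + k1)) (drop (i + k1) es)
     @ concat (replicate m (take k2 (drop j es))) @ drop (j + k2) es"

text \<open>(i,k1,j,k2) describes a pumpable pair p1 = es[i..<i+k1], p2 = es[j..<j+k2].\<close>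
definition pumpable_pair ::
  "('q, 'g) wps \<Rightarrow> ('q, 'g) config \<Rightarrow> ('q, 'g) edge list \<Rightarrow> nat \<Rightarrow> nat \<Rightarrow> nat \<Rightarrow> nat \<Rightarrow> bool" where
  "pumpable_pair A c es i k1 j k2 \<longleftrightarrow>
     0 < k1 \<and> 0 < k2 \<and> i + k1 \<le> j \<and> j + k2 \<le> length es \<and>
     (\<forall>m. is_path A c (pump es i k1 j k2 m))"

end

theory Submission imports Defs begin

lemma step_eq: "step A ((q0,g),(q1,cm)) (\<alpha>,p) = (if ((q0,g),(q1,cm)) \<in> edges A \<and> p = q0 \<and> \<alpha> \<noteq> [] \<and> hd \<alpha> = g \<and> is_config A (apply_com cm \<alpha>, q1) then Some (apply_com cm \<alpha>, q1) else None)"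
  by (simp add: step_def)

lemma run_basic: "run A c es = Some cs \<Longrightarrow> cs \<noteq> [] \<and> hd cs = c \<and> length cs = Suc (length es)"
  by (induction es arbitrary: c cs) (auto split: option.splits)

lemma run_append_Some: "run A c es1 = Some cs1 \<Longrightarrow> run A (last cs1) es2 = Some cs2 \<Longrightarrow> run A c (es1@es2) = Some (butlast cs1 @ cs2)"
proof (induction es1 arbitrary: c cs1)
  case Nil then show ?case by auto
next
  case (Cons e es1)
  from Cons.prems obtain c' cs0 where s: "step A e c = Some c'" and r: "run A c' es1 = Some cs0" and cs1: "cs1 = c # cs0"
    by (auto split: option.splits)
  have "cs0 \<noteq> []" using run_basic[OF r] by auto
  then have "last cs1 = last cs0" using cs1 by auto
  then have "run A c' (es1@es2) = Some (butlast cs0 @ cs2)" using Cons.IH[OF r] Cons.prems by auto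
  then show ?case using s cs1 \<open>cs0 \<noteq> []\<close> by auto
qed

lemma run_configs: "run A c es = Some cs \<Longrightarrow> is_config A c \<Longrightarrow> \<forall>x\<in>set cs. is_config A x"
proof (induction es arbitrary: c cs)
  case Nil then show ?case by auto
next
  case (Cons e es)
  from Cons.prems obtain c' cs0 where s: "step A e c = Some c'" and r: "run A c' es = Some cs0" and cs1: "cs = c # cs0"
    by (auto split: option.splits)
  have "is_config A c'" using s
    by (cases e; cases c) (auto simp: step_eq split: if_splits)
  then show ?case using Cons.IH[OF r] cs1 Cons.prems by auto
qed

lemma run_take: "run A c es = Some cs \<Longrightarrow> i \<le> length es \<Longrightarrow> run A c (take i es) = Some (take (Suc i) cs)"
proof (induction es arbitrary: c cs i)
  case Nil then show ?case by auto
next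
  case (Cons e es)
  from Cons.prems obtain c' cs0 where s: "step A e c = Some c'" and r: "run A c' es = Some cs0" and cs1: "cs = c # cs0"
    by (auto split: option.splits)
  show ?case
  proof (cases i)
    case 0 then show ?thesis using cs1 by auto
  next
    case (Suc i') then show ?thesis using Cons.IH[OF r, of i'] Cons.prems s cs1 by auto
  qed
qed

lemma run_drop: "run A c es = Some cs \<Longrightarrow> i \<le> length es \<Longrightarrow> run A (cs!i) (drop i es) = Some (drop i cs)"
proof (induction es arbitrary: c cs i)
  case Nil then show ?case by auto
next
  case (Cons e es)
  from Cons.prems obtain c' cs0 where s: "step A e c = Some c'" and r: "run A c' es = Some cs0" and cs1: "cs = c # cs0"
    by (auto split: option.splits)
  show ?case
  proof (cases i)
    case 0 then show ?thesis using cs1 Cons.prems by auto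
  next
    case (Suc i') then show ?thesis using Cons.IH[OF r, of i'] Cons.prems s cs1 by auto
  qed
qed

lemma run_seg: "run A c es = Some cs \<Longrightarrow> i \<le> j \<Longrightarrow> j \<le> length es \<Longrightarrow>
   run A (cs!i) (take (j-i) (drop i es)) = Some (take (Suc (j-i)) (drop i cs))"
proof -
  assume r: "run A c es = Some cs" and ij: "i \<le> j" "j \<le> length es"
  have "run A (cs!i) (drop i es) = Some (drop i cs)" using run_drop[OF r] ij by auto
  from run_take[OF this, of "j-i"] ij show ?thesis by auto
qed

lemma step_height: "run A c es = Some cs \<Longrightarrow> t < length es \<Longrightarrow>
   length (fst (cs!Suc t)) \<le> Suc (length (fst (cs!t))) \<and> length (fst (cs!t)) \<le> Suc (length (fst (cs!Suc t)))"
proof (induction es arbitrary: c cs t)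
  case Nil then show ?case by auto
next
  case (Cons e es)
  from Cons.prems obtain c' cs0 where s: "step A e c = Some c'" and r: "run A c' es = Some cs0" and cs1: "cs = c # cs0"
    by (auto split: option.splits)
  have b: "cs0 \<noteq> [] \<and> hd cs0 = c'" using run_basic[OF r] by auto
  show ?case
  proof (cases t)
    case 0
    have "cs0 ! 0 = c'" using b by (metis hd_conv_nth)
    moreover have "length (fst c') \<le> Suc (length (fst c)) \<and> length (fst c) \<le> Suc (length (fst c'))"
      using s by (cases e; cases c; cases "snd (snd e)") (auto simp: step_eq split: if_splits)
    ultimately show ?thesis using 0 cs1 by auto
  next
    case (Suc t') then show ?thesis using Cons.IH[OF r, of t'] Cons.prems cs1 by auto
  qed
qed

lemma apply_com_append: "\<not> (cm = Pop \<and> \<beta> = []) \<Longrightarrow> apply_com cm (\<beta> @ \<tau>) = apply_com cm \<beta> @ \<tau>"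
  by (cases cm; cases \<beta>) auto


definition rep :: "'g list \<Rightarrow> 'g list \<Rightarrow> ('g list \<times> 'q) \<Rightarrow> ('g list \<times> 'q)" where
  "rep \<tau> \<tau>' c = (take (length (fst c) - length \<tau>) (fst c) @ \<tau>', snd c)"

lemma frame:
  assumes "run A (\<beta> @ \<tau>, q) es = Some cs" "\<tau> \<noteq> []" "\<tau>' \<noteq> []" "hd \<tau>' = hd \<tau>" "set \<tau>' \<subseteq> alphabet A"
    "\<forall>c\<in>set cs. length \<tau> \<le> length (fst c)"
  shows "run A (\<beta> @ \<tau>', q) es = Some (map (rep \<tau> \<tau>') cs) \<and> (\<forall>c\<in>set cs. \<exists>\<beta>'. fst c = \<beta>' @ \<tau>)"
  using assms(1,6)
proof (induction es arbitrary: \<beta> q cs)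
  case Nil then show ?case by (auto simp: rep_def)
next
  case (Cons e es)
  from Cons.prems obtain c' cs0 where s: "step A e (\<beta> @ \<tau>, q) = Some c'" and r: "run A c' es = Some cs0" and cs1: "cs = (\<beta> @ \<tau>, q) # cs0"
    by (auto split: option.splits)
  obtain q0 g q1 cm where e: "e = ((q0,g),(q1,cm))" by (cases e) auto
  have c': "c' = (apply_com cm (\<beta> @ \<tau>), q1)" and cond: "e \<in> edges A" "q = q0" "hd (\<beta> @ \<tau>) = g" "is_config A (apply_com cm (\<beta> @ \<tau>), q1)"
    using s by (auto simp: e step_eq split: if_splits)
  have "c' \<in> set cs0" using run_basic[OF r] by (metis list.set_sel(1))
  then have len: "length \<tau> \<le> length (apply_com cm (\<beta> @ \<tau>))" using Cons.prems(2) cs1 c' by auto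
  have np: "\<not> (cm = Pop \<and> \<beta> = [])"
  proof
    assume "cm = Pop \<and> \<beta> = []"
    then show False using len assms(2) by (cases \<tau>) auto
  qed
  have ac: "apply_com cm (\<beta> @ \<tau>) = apply_com cm \<beta> @ \<tau>" "apply_com cm (\<beta> @ \<tau>') = apply_com cm \<beta> @ \<tau>'"
    using apply_com_append[OF np] by auto
  have hd': "hd (\<beta> @ \<tau>') = hd (\<beta> @ \<tau>)" using assms(2,3,4) by (cases \<beta>) auto
  have ic: "is_config A (apply_com cm \<beta> @ \<tau>', q1)"
    using cond(4) assms(3,5) ac(1) by (auto simp: is_config_def)
  have s': "step A e (\<beta> @ \<tau>', q) = Some (apply_com cm \<beta> @ \<tau>', q1)"
    using cond hd' ic assms(3) ac by (auto simp: e step_eq)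
  have IH: "run A (apply_com cm \<beta> @ \<tau>', q1) es = Some (map (rep \<tau> \<tau>') cs0) \<and> (\<forall>c\<in>set cs0. \<exists>\<beta>'. fst c = \<beta>' @ \<tau>)"
    using Cons.IH[of "apply_com cm \<beta>" q1 cs0] r c' ac Cons.prems(2) cs1 by auto
  show ?case using IH s' cs1 by (auto simp: rep_def)
qed


lemma rep_eq: "fst x = \<beta>' @ \<tau> \<Longrightarrow> rep \<tau> \<tau>' x = (\<beta>' @ \<tau>', snd x)"
  by (simp add: rep_def)

lemma seg_set: "j < length cs \<Longrightarrow> i \<le> j \<Longrightarrow> x \<in> set (take (Suc (j-i)) (drop i cs)) \<Longrightarrow> \<exists>t. i \<le> t \<and> t \<le> j \<and> x = cs!t"
proof -
  assume a: "j < length cs" "i \<le> j" "x \<in> set (take (Suc (j-i)) (drop i cs))"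
  then obtain u where u: "u < length (take (Suc (j-i)) (drop i cs))" "x = take (Suc (j-i)) (drop i cs) ! u"
    by (auto simp: in_set_conv_nth)
  then have "u \<le> j - i" "x = cs ! (i+u)" using a by auto
  then show ?thesis using a by (intro exI[where x="i+u"]) auto
qed

lemma seg_last: "j < length cs \<Longrightarrow> i \<le> j \<Longrightarrow> last (take (Suc (j-i)) (drop i cs)) = cs!j"
proof -
  assume a: "j < length cs" "i \<le> j"
  then have "length (take (Suc (j-i)) (drop i cs)) = Suc (j-i)" by auto
  then show ?thesis using a by (simp add: last_conv_nth)
qed

lemma frame_seg:
  assumes r: "run A c es = Some cs" and ij: "i \<le> j" "j \<le> length es" and ci: "cs!i = (\<beta> @ \<tau>, q)"
    and ne: "\<tau> \<noteq> []" "\<tau>' \<noteq> []" and hd: "hd \<tau>' = hd \<tau>" and al: "set \<tau>' \<subseteq> alphabet A"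
    and ht: "\<forall>t. i \<le> t \<and> t \<le> j \<longrightarrow> length \<tau> \<le> length (fst (cs!t))"
  shows "(\<forall>t. i \<le> t \<and> t \<le> j \<longrightarrow> (\<exists>\<beta>'. fst (cs!t) = \<beta>' @ \<tau>)) \<and>
    (\<exists>cs'. run A (\<beta> @ \<tau>', q) (take (j-i) (drop i es)) = Some cs' \<and> last cs' = rep \<tau> \<tau>' (cs!j) \<and>
       (\<forall>x\<in>set cs'. \<exists>t. i \<le> t \<and> t \<le> j \<and> x = rep \<tau> \<tau>' (cs!t)))"
proof -
  have lc: "length cs = Suc (length es)" using run_basic[OF r] by auto
  define seg where "seg = take (Suc (j-i)) (drop i cs)"
  have rs: "run A (\<beta> @ \<tau>, q) (take (j-i) (drop i es)) = Some seg"
    using run_seg[OF r ij] ci seg_def by simp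
  have jl: "j < length cs" using lc ij by auto
  have hs: "\<forall>x\<in>set seg. length \<tau> \<le> length (fst x)"
    using seg_set[OF jl ij(1)] ht unfolding seg_def by blast
  note F = frame[OF rs ne hd al hs]
  have segne: "seg \<noteq> []" using run_basic[OF rs] by auto
  have "\<forall>t. i \<le> t \<and> t \<le> j \<longrightarrow> (\<exists>\<beta>'. fst (cs!t) = \<beta>' @ \<tau>)"
  proof (intro allI impI)
    fix t assume t: "i \<le> t \<and> t \<le> j"
    have "cs!t \<in> set seg" unfolding seg_def using t jl
      by (auto simp: in_set_conv_nth intro!: exI[where x="t - i"])
    then show "\<exists>\<beta>'. fst (cs!t) = \<beta>' @ \<tau>" using F by blast
  qed
  moreover have "last (map (rep \<tau> \<tau>') seg) = rep \<tau> \<tau>' (cs!j)"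
    using segne seg_last[OF jl ij(1)] by (simp add: last_map seg_def)
  moreover have "\<forall>x\<in>set (map (rep \<tau> \<tau>') seg). \<exists>t. i \<le> t \<and> t \<le> j \<and> x = rep \<tau> \<tau>' (cs!t)"
  proof
    fix x assume "x \<in> set (map (rep \<tau> \<tau>') seg)"
    then obtain y where y: "y \<in> set seg" "x = rep \<tau> \<tau>' y" by auto
    then obtain t where "i \<le> t \<and> t \<le> j \<and> y = cs!t" using seg_set[OF jl ij(1)] unfolding seg_def by blast
    then show "\<exists>t. i \<le> t \<and> t \<le> j \<and> x = rep \<tau> \<tau>' (cs!t)" using y by blast
  qed
  ultimately show ?thesis using F by blast
qed

definition goes :: "('q,'g) wps \<Rightarrow> ('q,'g) config \<Rightarrow> ('q,'g) edge list \<Rightarrow> ('q,'g) config \<Rightarrow> nat \<Rightarrow> bool" where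
  "goes A c es c' B \<longleftrightarrow> (\<exists>cs. run A c es = Some cs \<and> last cs = c' \<and> (\<forall>x\<in>set cs. length (fst x) \<le> B))"

lemma goes_app: "goes A c es1 c' B1 \<Longrightarrow> goes A c' es2 c'' B2 \<Longrightarrow> goes A c (es1 @ es2) c'' (max B1 B2)"
proof -
  assume g1: "goes A c es1 c' B1" and g2: "goes A c' es2 c'' B2"
  obtain cs1 where 1: "run A c es1 = Some cs1" "last cs1 = c'" "\<forall>x\<in>set cs1. length (fst x) \<le> B1"
    using g1 goes_def by metis
  obtain cs2 where 2: "run A c' es2 = Some cs2" "last cs2 = c''" "\<forall>x\<in>set cs2. length (fst x) \<le> B2"
    using g2 goes_def by metis
  have r: "run A c (es1@es2) = Some (butlast cs1 @ cs2)" using run_append_Some[OF 1(1)] 1(2) 2(1) by simp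
  have "cs2 \<noteq> []" using run_basic[OF 2(1)] by auto
  then have "last (butlast cs1 @ cs2) = c''" using 2(2) by simp
  moreover have "\<forall>x\<in>set (butlast cs1 @ cs2). length (fst x) \<le> max B1 B2"
    using 1(3) 2(3) in_set_butlastD[of _ cs1] by (metis Un_iff max.coboundedI1 max.coboundedI2 set_append)
  ultimately show ?thesis using r goes_def by blast
qed

lemma goes_intro: "run A c es = Some cs \<Longrightarrow> last cs = c' \<Longrightarrow> \<exists>B. goes A c es c' B"
  unfolding goes_def by (intro exI[where x="Max ((\<lambda>x. length (fst x)) ` set cs)"]) auto

lemma goes_iter:
  "(\<And>x. x0 \<le> x \<Longrightarrow> x < x0 + m \<Longrightarrow> \<exists>B. goes A (g x) p (g (Suc x)) B) \<Longrightarrow>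
   \<exists>B. goes A (g x0) (concat (replicate m p)) (g (x0 + m)) B"
proof (induction m arbitrary: x0)
  case 0
  show ?case unfolding goes_def by (intro exI[where x="length (fst (g x0))"]) auto
next
  case (Suc m)
  obtain B1 where 1: "goes A (g x0) p (g (Suc x0)) B1" using Suc.prems[of x0] by auto
  obtain B2 where 2: "goes A (g (Suc x0)) (concat (replicate m p)) (g (Suc x0 + m)) B2"
    using Suc.IH[of "Suc x0"] Suc.prems by auto
  show ?case using goes_app[OF 1 2] by auto
qed

lemma ivt_up: "(\<forall>t. s \<le> t \<and> t < u \<longrightarrow> f (Suc t) \<le> Suc (f t)) \<Longrightarrow> s \<le> u \<Longrightarrow> f s \<le> k \<Longrightarrow> k \<le> f u \<Longrightarrow>
  \<exists>t. s \<le> t \<and> t \<le> u \<and> f t = (k::nat)"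
proof (induction u)
  case 0 then show ?case by auto
next
  case (Suc u)
  show ?case
  proof (cases "s = Suc u")
    case True then show ?thesis using Suc by auto
  next
  case nsu: False
  show ?thesis
  proof (cases "k \<le> f u")
    case True then show ?thesis using Suc nsu by auto
  next
    case False
    have su: "s \<le> u" using nsu Suc by auto
    have "f (Suc u) \<le> Suc (f u)" using Suc.prems(1) su by auto
    then have "f (Suc u) = k" using False Suc.prems by linarith
    then show ?thesis using Suc by auto
  qed
  qed
qed

lemma ivt_down: "(\<forall>t. s \<le> t \<and> t < u \<longrightarrow> f t \<le> Suc (f (Suc t))) \<Longrightarrow> s \<le> u \<Longrightarrow> k \<le> f s \<Longrightarrow> f u \<le> k \<Longrightarrow>
  \<exists>t. s \<le> t \<and> t \<le> u \<and> f t = (k::nat)"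
proof (induction u)
  case 0 then show ?case by auto
next
  case (Suc u)
  show ?case
  proof (cases "s = Suc u")
    case True then show ?thesis using Suc by auto
  next
  case nsu: False
  show ?thesis
  proof (cases "f u \<le> k")
    case True then show ?thesis using Suc nsu by auto
  next
    case False
    have su: "s \<le> u" using nsu Suc by auto
    have "f u \<le> Suc (f (Suc u))" using Suc.prems(1) su by auto
    then have "f (Suc u) = k" using False Suc.prems by linarith
    then show ?thesis using Suc by auto
  qed
  qed
qed


lemma ash_eq: "run A c es = Some cs \<Longrightarrow> last cs = c' \<Longrightarrow>
  ASH A c es = Max (set (map (\<lambda>x. length (fst x)) cs)) - max (length (fst c)) (length (fst c'))"
  using run_basic[of A c es cs] by (simp add: ASH_def Let_def hd_map last_map)

lemma rep_len: "length \<tau> \<le> length (fst x) \<Longrightarrow> length (fst (rep \<tau> \<tau>' x)) = length (fst x) - length \<tau> + length \<tau>'"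
  by (simp add: rep_def)

lemma exists_pair:
  assumes wps: "is_wps A" and r: "run A c es = Some cs" and ic: "is_config A c"
    and big: "(card (states A) * card (alphabet A))^2 \<le> ASH A c es"
  shows "\<exists>i k1 j k2. 0 < k1 \<and> 0 < k2 \<and> i + k1 \<le> j \<and> j + k2 \<le> length es \<and>
     (\<forall>m. \<exists>B. goes A c (pump es i k1 j k2 m) (last cs) B) \<and>
     goes A c (pump es i k1 j k2 0) (last cs) (Max (set (map (\<lambda>x. length (fst x)) cs)))"
proof -
  define N where "N = length es"
  have lc: "length cs = Suc N" and csne: "cs \<noteq> []" and hdc: "hd cs = c"
    using run_basic[OF r] N_def by auto
  have c0: "cs!0 = c" using csne hdc by (metis hd_conv_nth)
  define h where "h t = length (fst (cs!t))" for t
  define H where "H = Max (set (map (\<lambda>x. length (fst x)) cs))"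
  have hall: "\<forall>y\<in>set cs. length (fst y) \<le> H" unfolding H_def by (auto intro!: Max_ge)
  have cfg: "\<forall>t\<le>N. is_config A (cs!t)" using run_configs[OF r ic] lc by auto
  have hle: "\<forall>t\<le>N. h t \<le> H"
  proof (intro allI impI)
    fix t assume "t \<le> N"
    then have "h t \<in> set (map (\<lambda>x. length (fst x)) cs)" using lc unfolding h_def
      by (metis less_Suc_eq_le nth_map nth_mem length_map)
    then show "h t \<le> H" unfolding H_def by simp
  qed
  have "H \<in> set (map (\<lambda>x. length (fst x)) cs)" unfolding H_def using csne by (intro Max_in) auto
  then have "\<exists>t\<le>N. h t = H" using lc unfolding h_def in_set_conv_nth
    by (metis length_map less_Suc_eq_le nth_map)
  define T where "T = (LEAST t. t \<le> N \<and> h t = H)"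
  have T: "T \<le> N" "h T = H" using LeastI_ex[OF \<open>\<exists>t\<le>N. h t = H\<close>] unfolding T_def by auto
  have lastc: "last cs = cs!N" using csne lc by (simp add: last_conv_nth)
  have ash: "ASH A c es = H - max (h 0) (h N)"
    using ash_eq[OF r refl] lastc c0 unfolding H_def h_def by simp
  define L0 where "L0 = max (h 0) (h N)"
  have h0: "1 \<le> h 0" using ic c0 unfolding h_def is_config_def by (cases "fst c") auto
  define cQ where "cQ = card (states A)"
  define cG where "cG = card (alphabet A)"
  have fin: "finite (states A)" "finite (alphabet A)" using wps unfolding is_wps_def by auto
  have "init A \<in> states A" "bottom A \<in> alphabet A" using wps unfolding is_wps_def by auto
  then have cG1: "1 \<le> cG" using fin unfolding cG_def by (metis One_nat_def Suc_leI card_gt_0_iff empty_iff)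
  have "(cQ*cG)^2 = (cQ * (cG*cQ)) * cG" by (simp add: power2_eq_square algebra_simps)
  also have "\<dots> \<ge> cQ * (cG*cQ)" using cG1 by simp
  finally have cardle: "cQ * (cG * cQ) \<le> H - L0" using big ash unfolding L0_def cQ_def cG_def by linarith
  have hup: "\<forall>t. 0 \<le> t \<and> t < N \<longrightarrow> h (Suc t) \<le> Suc (h t)"
    using step_height[OF r] N_def unfolding h_def by auto
  have hdown: "\<forall>t. 0 \<le> t \<and> t < N \<longrightarrow> h t \<le> Suc (h (Suc t))"
    using step_height[OF r] N_def unfolding h_def by auto
  have hup': "\<And>s u. u \<le> N \<Longrightarrow> \<forall>t. s \<le> t \<and> t < u \<longrightarrow> h (Suc t) \<le> Suc (h t)" using hup by auto
  have hdown': "\<And>s u. u \<le> N \<Longrightarrow> \<forall>t. s \<le> t \<and> t < u \<longrightarrow> h t \<le> Suc (h (Suc t))" using hdown by auto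
  define a where "a k = (GREATEST t. t \<le> T \<and> h t = k)" for k
  define b where "b k = (LEAST t. T \<le> t \<and> t \<le> N \<and> h t = k)" for k
  have aprop: "a k \<le> T \<and> h (a k) = k \<and> (\<forall>t. a k < t \<and> t \<le> T \<longrightarrow> k < h t)" if k: "L0 \<le> k" "k \<le> H" for k
  proof -
    obtain t0 where t0: "0 \<le> t0 \<and> t0 \<le> T \<and> h t0 = k"
      using ivt_up[OF hup'[OF T(1)], of 0 k] k T unfolding L0_def by auto
    have P: "a k \<le> T \<and> h (a k) = k" using GreatestI_nat[of "\<lambda>t. t \<le> T \<and> h t = k" t0 T] t0
      unfolding a_def by auto
    have "\<forall>t. a k < t \<and> t \<le> T \<longrightarrow> k < h t"
    proof (intro allI impI; rule ccontr)
      fix t assume t: "a k < t \<and> t \<le> T" "\<not> k < h t"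
      then obtain u where u: "t \<le> u \<and> u \<le> T \<and> h u = k" using ivt_up[OF hup'[OF T(1)], of t k] T k by auto
      then have "u \<le> a k" using Greatest_le_nat[of "\<lambda>t. t \<le> T \<and> h t = k" u T] unfolding a_def by auto
      with t u show False by auto
    qed
    with P show ?thesis by auto
  qed
  have bprop: "T \<le> b k \<and> b k \<le> N \<and> h (b k) = k \<and> (\<forall>t. T \<le> t \<and> t < b k \<longrightarrow> k < h t)" if k: "L0 \<le> k" "k \<le> H" for k
  proof -
    obtain t0 where t0: "T \<le> t0 \<and> t0 \<le> N \<and> h t0 = k"
      using ivt_down[OF hdown'[OF order.refl], of T k] k T unfolding L0_def by auto
    have P: "T \<le> b k \<and> b k \<le> N \<and> h (b k) = k" using LeastI[of "\<lambda>t. T \<le> t \<and> t \<le> N \<and> h t = k" t0] t0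
      unfolding b_def by auto
    have "\<forall>t. T \<le> t \<and> t < b k \<longrightarrow> k < h t"
    proof (intro allI impI; rule ccontr)
      fix t assume t: "T \<le> t \<and> t < b k" "\<not> k < h t"
      then obtain u where u: "T \<le> u \<and> u \<le> t \<and> h u = k"
        using ivt_down[OF hdown', of t T k] T k P by auto
      then have "b k \<le> u" using Least_le[of "\<lambda>t. T \<le> t \<and> t \<le> N \<and> h t = k" u] t P unfolding b_def by auto
      with t u show False by auto
    qed
    with P show ?thesis by auto
  qed
  have order: "a k < a l \<and> b l < b k" if lt: "L0 \<le> k" "k < l" "l \<le> H" for k l
  proof -
    have A1: "a k \<le> T \<and> h (a k) = k \<and> (\<forall>t. a k < t \<and> t \<le> T \<longrightarrow> k < h t)" using aprop lt by auto
    have A2: "a l \<le> T \<and> h (a l) = l \<and> (\<forall>t. a l < t \<and> t \<le> T \<longrightarrow> l < h t)" using aprop lt by auto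
    have B1: "T \<le> b k \<and> b k \<le> N \<and> h (b k) = k \<and> (\<forall>t. T \<le> t \<and> t < b k \<longrightarrow> k < h t)" using bprop lt by auto
    have B2: "T \<le> b l \<and> b l \<le> N \<and> h (b l) = l \<and> (\<forall>t. T \<le> t \<and> t < b l \<longrightarrow> l < h t)" using bprop lt by auto
    have "a k < a l"
    proof (rule ccontr)
      assume "\<not> a k < a l"
      moreover have "a k \<noteq> a l" using A1 A2 lt by auto
      ultimately have "a l < a k" by simp
      then have "l < h (a k)" using A1 A2 by blast
      then show False using A1 lt by simp
    qed
    moreover have "b l < b k"
    proof (rule ccontr)
      assume "\<not> b l < b k"
      moreover have "b k \<noteq> b l" using B1 B2 lt by auto
      ultimately have "b k < b l" by simp
      then have "l < h (b k)" using B1 B2 by blast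
      then show False using B1 lt by simp
    qed
    ultimately show ?thesis by auto
  qed
  have heights: "k \<le> h t" if th: "L0 \<le> k" "k \<le> H" "a k \<le> t" "t \<le> b k" for k t
  proof -
    have A1: "a k \<le> T \<and> h (a k) = k \<and> (\<forall>t. a k < t \<and> t \<le> T \<longrightarrow> k < h t)" using aprop th by auto
    have B1: "T \<le> b k \<and> b k \<le> N \<and> h (b k) = k \<and> (\<forall>t. T \<le> t \<and> t < b k \<longrightarrow> k < h t)" using bprop th by auto
    show ?thesis
    proof (cases "t = a k \<or> t = b k")
      case True then show ?thesis using A1 B1 by auto
    next
      case False
      then have "a k < t" "t < b k" using th by auto
      show ?thesis
      proof (cases "t \<le> T")
        case True then show ?thesis using A1 \<open>a k < t\<close> by auto
      next
        case False then have "T \<le> t" by simp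
        then show ?thesis using B1 \<open>t < b k\<close> by auto
      qed
    qed
  qed
  define f where "f k = (snd (cs!a k), hd (fst (cs!a k)), snd (cs!b k))" for k
  have sub: "f ` {L0..H} \<subseteq> states A \<times> alphabet A \<times> states A"
  proof
    fix x assume "x \<in> f ` {L0..H}"
    then obtain k where k: "L0 \<le> k" "k \<le> H" "x = f k" by auto
    have "a k \<le> N" "b k \<le> N" using aprop[OF k(1,2)] bprop[OF k(1,2)] T by auto
    then have "is_config A (cs!a k)" "is_config A (cs!b k)" using cfg by auto
    then have "snd (cs!a k) \<in> states A" "hd (fst (cs!a k)) \<in> alphabet A" "snd (cs!b k) \<in> states A"
      unfolding is_config_def by (auto dest: hd_in_set)
    then show "x \<in> states A \<times> alphabet A \<times> states A" using k(3) unfolding f_def by simp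
  qed
  have "\<not> inj_on f {L0..H}"
  proof
    assume "inj_on f {L0..H}"
    then have "card (f ` {L0..H}) = Suc H - L0" by (simp add: card_image)
    moreover have "card (f ` {L0..H}) \<le> cQ * (cG * cQ)"
      using card_mono[OF _ sub] fin unfolding cQ_def cG_def by (simp add: card_cartesian_product)
    moreover have "L0 \<le> H" using hle T unfolding L0_def by auto
    ultimately show False using cardle by linarith
  qed
  then obtain k l where kl: "L0 \<le> k" "k < l" "l \<le> H" "f k = f l"
  proof -
    obtain x y where xy: "x \<in> {L0..H}" "y \<in> {L0..H}" "f x = f y" "x \<noteq> y"
      using \<open>\<not> inj_on f {L0..H}\<close> unfolding inj_on_def by blast
    show ?thesis
    proof (cases "x < y")
      case True then show ?thesis using that[of x y] xy by auto
    next
      case False then show ?thesis using that[of y x] xy by auto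
    qed
  qed

  have akl: "a k < a l" "b l < b k" using order[OF kl(1,2,3)] by auto
  have kH: "k \<le> H" and lL: "L0 \<le> l" using kl by auto
  note Ak = aprop[OF kl(1) kH] and Al = aprop[OF lL kl(3)] and Bk = bprop[OF kl(1) kH] and Bl = bprop[OF lL kl(3)]
  define \<tau>k where "\<tau>k = fst (cs!a k)"
  define \<tau>l where "\<tau>l = fst (cs!a l)"
  define q where "q = snd (cs!a k)"
  define q' where "q' = snd (cs!b k)"
  have fkl: "snd (cs!a l) = q" "hd \<tau>l = hd \<tau>k" "snd (cs!b l) = q'"
    using kl(4) unfolding f_def q_def q'_def \<tau>k_def \<tau>l_def by auto
  have len: "length \<tau>k = k" "length \<tau>l = l" using Ak Al unfolding h_def \<tau>k_def \<tau>l_def by auto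
  have "1 \<le> k" using kl(1) h0 unfolding L0_def by auto
  then have tkne: "\<tau>k \<noteq> []" using len by auto
  have cfgk: "is_config A (cs!a k)" "is_config A (cs!a l)" using cfg Ak Al T by auto
  have setk: "set \<tau>k \<subseteq> alphabet A" "set \<tau>l \<subseteq> alphabet A" using cfgk unfolding is_config_def \<tau>k_def \<tau>l_def by auto
  have ord: "a k \<le> a l" "a l \<le> b l" "b l \<le> b k" "b k \<le> length es" using akl Al Bl Bk N_def by auto
  have alen: "a l \<le> length es" "b l \<le> length es" using ord by auto
  have cak: "cs!a k = ([] @ \<tau>k, q)" unfolding \<tau>k_def q_def by simp
  have cal: "cs!a l = ([] @ \<tau>l, q)" using fkl unfolding \<tau>l_def by (metis append_Nil prod.collapse)
  have hP1: "\<forall>t. a k \<le> t \<and> t \<le> a l \<longrightarrow> length \<tau>k \<le> length (fst (cs!t))"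
    using heights[OF kl(1) kH] ord len unfolding h_def by auto
  have hM: "\<forall>t. a l \<le> t \<and> t \<le> b l \<longrightarrow> length \<tau>l \<le> length (fst (cs!t))"
    using heights[OF lL kl(3)] len unfolding h_def by auto
  have hP2: "\<forall>t. b l \<le> t \<and> t \<le> b k \<longrightarrow> length \<tau>k \<le> length (fst (cs!t))"
    using heights[OF kl(1) kH] ord len unfolding h_def by auto
  have "\<forall>t. a k \<le> t \<and> t \<le> a l \<longrightarrow> (\<exists>\<beta>'. fst (cs!t) = \<beta>' @ \<tau>k)"
    using frame_seg[OF r ord(1) _ cak tkne tkne refl setk(1) hP1] ord by auto
  then obtain \<beta> where \<beta>: "\<tau>l = \<beta> @ \<tau>k" using ord unfolding \<tau>l_def by auto
  have \<beta>ne: "\<beta> \<noteq> []" using \<beta> len kl(2) by auto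
  have hd\<beta>: "hd \<beta> = hd \<tau>k" using \<beta> \<beta>ne fkl(2) by simp
  have set\<beta>: "set \<beta> \<subseteq> alphabet A" using \<beta> setk by auto
  define pw where "pw m = concat (replicate m \<beta>) @ \<tau>k" for m
  have pwS: "pw (Suc m) = \<beta> @ pw m" for m unfolding pw_def by simp
  have pwne: "pw m \<noteq> []" for m unfolding pw_def using tkne by simp
  have pwhd: "hd (pw m) = hd \<tau>k" for m by (cases m) (auto simp: pwS hd\<beta> \<beta>ne, simp add: pw_def)
  have pwset: "set (pw m) \<subseteq> alphabet A" for m unfolding pw_def using set\<beta> setk by auto
  have lne: "\<tau>l \<noteq> []" using \<beta> tkne by simp
  have "\<forall>t. a l \<le> t \<and> t \<le> b l \<longrightarrow> (\<exists>\<beta>'. fst (cs!t) = \<beta>' @ \<tau>l)"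
    using frame_seg[OF r ord(2) _ cal lne lne refl setk(2) hM] ord by auto
  then obtain \<beta>1 where "fst (cs!b l) = \<beta>1 @ \<tau>l" using ord by auto
  moreover have "length (fst (cs!b l)) = l" using Bl unfolding h_def by auto
  ultimately have cbl1: "fst (cs!b l) = \<tau>l" using len by simp
  then have cbl: "cs!b l = (\<beta> @ \<tau>k, q')" using fkl \<beta> by (metis prod.collapse)
  have "\<forall>t. b l \<le> t \<and> t \<le> b k \<longrightarrow> (\<exists>\<beta>'. fst (cs!t) = \<beta>' @ \<tau>k)"
    using frame_seg[OF r ord(3) _ cbl tkne tkne refl setk(1) hP2] ord by auto
  then obtain \<beta>2 where "fst (cs!b k) = \<beta>2 @ \<tau>k" using ord by auto
  moreover have "length (fst (cs!b k)) = k" using Bk unfolding h_def by auto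
  ultimately have cbk1: "fst (cs!b k) = \<tau>k" using len by simp
  then have cbk: "cs!b k = (\<tau>k, q')" unfolding q'_def by (metis prod.collapse)
  define P1 where "P1 = take (a l - a k) (drop (a k) es)"
  define M where "M = take (b l - a l) (drop (a l) es)"
  define P2 where "P2 = take (b k - b l) (drop (b l) es)"
  have gP1: "\<exists>B. goes A (pw x, q) P1 (pw (Suc x), q) B" for x
  proof -
    obtain cs' where "run A ([] @ pw x, q) P1 = Some cs'" "last cs' = rep \<tau>k (pw x) (cs!a l)"
      using frame_seg[OF r ord(1) alen(1) cak tkne pwne[of x] pwhd[of x] pwset[of x] hP1] ord unfolding P1_def by blast
    moreover have "rep \<tau>k (pw x) (cs!a l) = (pw (Suc x), q)"
      using rep_eq[of "cs!a l" \<beta> \<tau>k "pw x"] cal \<beta> pwS by simp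
    ultimately show ?thesis using goes_intro by fastforce
  qed
  have gP2: "\<exists>B. goes A (pw (Suc x), q') P2 (pw x, q') B" for x
  proof -
    obtain cs' where "run A (\<beta> @ pw x, q') P2 = Some cs'" "last cs' = rep \<tau>k (pw x) (cs!b k)"
      using frame_seg[OF r ord(3) ord(4) cbl tkne pwne[of x] pwhd[of x] pwset[of x] hP2] ord unfolding P2_def by blast
    moreover have "rep \<tau>k (pw x) (cs!b k) = (pw x, q')"
      using rep_eq[of "cs!b k" "[]" \<tau>k "pw x"] cbk by simp
    ultimately show ?thesis using goes_intro pwS by fastforce
  qed
  have gM: "\<exists>cs'. run A (pw x, q) M = Some cs' \<and> last cs' = (pw x, q') \<and>
       (\<forall>y\<in>set cs'. \<exists>t. a l \<le> t \<and> t \<le> b l \<and> y = rep \<tau>l (pw x) (cs!t))" for x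
  proof -
    have pwhd': "hd (pw x) = hd \<tau>l" using pwhd fkl by simp
    obtain cs' where "run A ([] @ pw x, q) M = Some cs'" "last cs' = rep \<tau>l (pw x) (cs!b l)"
       "\<forall>y\<in>set cs'. \<exists>t. a l \<le> t \<and> t \<le> b l \<and> y = rep \<tau>l (pw x) (cs!t)"
      using frame_seg[OF r ord(2) alen(2) cal lne pwne[of x] pwhd' pwset[of x] hM] ord unfolding M_def by blast
    moreover have "rep \<tau>l (pw x) (cs!b l) = (pw x, q')"
      using rep_eq[of "cs!b l" "[]" \<tau>l "pw x"] cbl1 fkl by simp
    ultimately show ?thesis by auto
  qed
  have gPre: "goes A c (take (a k) es) (\<tau>k, q) H"
  proof -
    have "run A c (take (a k) es) = Some (take (Suc (a k)) cs)" using run_take[OF r] ord by auto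
    moreover have "last (take (Suc (a k)) cs) = (\<tau>k, q)" using seg_last[of "a k" cs 0] cak lc Ak T by simp
    moreover have "\<forall>y\<in>set (take (Suc (a k)) cs). length (fst y) \<le> H"
      using set_take_subset[of "Suc (a k)" cs] hall by blast
    ultimately show ?thesis unfolding goes_def by blast
  qed
  have gSuf: "goes A (\<tau>k, q') (drop (b k) es) (last cs) H"
  proof -
    have "run A (\<tau>k, q') (drop (b k) es) = Some (drop (b k) cs)" using run_drop[OF r ord(4)] cbk by simp
    moreover have "last (drop (b k) cs) = last cs" using lc ord N_def by simp
    moreover have "\<forall>y\<in>set (drop (b k) cs). length (fst y) \<le> H"
      using set_drop_subset[of "b k" cs] hall by blast
    ultimately show ?thesis unfolding goes_def by blast
  qed
  have pumpeq: "pump es (a k) (a l - a k) (b l) (b k - b l) m =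
     take (a k) es @ concat (replicate m P1) @ M @ concat (replicate m P2) @ drop (b k) es" for m
    unfolding pump_def P1_def M_def P2_def using ord by simp
  have gall: "\<exists>B. goes A c (pump es (a k) (a l - a k) (b l) (b k - b l) m) (last cs) B" for m
  proof -
    obtain B1 where 1: "goes A (pw 0, q) (concat (replicate m P1)) (pw m, q) B1"
      using goes_iter[of 0 m A "\<lambda>x. (pw x, q)" P1] gP1 by auto
    obtain cs' where "run A (pw m, q) M = Some cs'" "last cs' = (pw m, q')" using gM by blast
    then obtain B2 where 2: "goes A (pw m, q) M (pw m, q') B2" using goes_intro by blast
    obtain B3 where 3: "goes A (pw m, q') (concat (replicate m P2)) (pw 0, q') B3"
    proof -
      have "\<exists>B. goes A ((\<lambda>x. (pw (m - x), q')) 0) (concat (replicate m P2)) ((\<lambda>x. (pw (m - x), q')) (0 + m)) B"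
      proof (rule goes_iter)
        fix x assume "0 \<le> x" "x < 0 + m"
        then have "m - x = Suc (m - Suc x)" by simp
        then show "\<exists>B. goes A (pw (m - x), q') P2 (pw (m - Suc x), q') B" using gP2 by simp
      qed
      then show ?thesis using that by auto
    qed
    have p0: "pw 0 = \<tau>k" unfolding pw_def by simp
    show ?thesis using goes_app[OF gPre goes_app[OF 1[unfolded p0] goes_app[OF 2 goes_app[OF 3[unfolded p0] gSuf]]]]
      unfolding pumpeq by blast
  qed
  have g0: "goes A c (pump es (a k) (a l - a k) (b l) (b k - b l) 0) (last cs) H"
  proof -
    obtain cs' where c': "run A (pw 0, q) M = Some cs'" "last cs' = (pw 0, q')"
       "\<forall>y\<in>set cs'. \<exists>t. a l \<le> t \<and> t \<le> b l \<and> y = rep \<tau>l (pw 0) (cs!t)" using gM by blast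
    have p0: "pw 0 = \<tau>k" unfolding pw_def by simp
    have "\<forall>y\<in>set cs'. length (fst y) \<le> H"
    proof
      fix y assume "y \<in> set cs'"
      then obtain t where t: "a l \<le> t" "t \<le> b l" "y = rep \<tau>l (pw 0) (cs!t)" using c'(3) by blast
      have "length \<tau>l \<le> length (fst (cs!t))" using hM t by auto
      then have "length (fst y) = length (fst (cs!t)) - l + k" using rep_len[OF \<open>length \<tau>l \<le> length (fst (cs!t))\<close>, of \<tau>k] t(3) p0 len by simp
      also have "\<dots> \<le> h t" unfolding h_def using kl(2) \<open>length \<tau>l \<le> length (fst (cs!t))\<close> len by simp
      also have "\<dots> \<le> H" using hle t ord N_def by auto
      finally show "length (fst y) \<le> H" .
    qed
    then have 2: "goes A (\<tau>k, q) M (\<tau>k, q') H" using c' p0 unfolding goes_def by auto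
    show ?thesis using goes_app[OF gPre goes_app[OF 2 gSuf]] unfolding pumpeq by simp
  qed
  show ?thesis
    apply (rule exI[where x="a k"], rule exI[where x="a l - a k"], rule exI[where x="b l"], rule exI[where x="b k - b l"])
    using akl ord gall g0 unfolding H_def by auto
qed

lemma pump_decomp: "i + k1 \<le> j \<Longrightarrow> j + k2 \<le> length es \<Longrightarrow>
  es = take i es @ take k1 (drop i es) @ take (j - (i + k1)) (drop (i + k1) es) @ take k2 (drop j es) @ drop (j + k2) es"
proof -
  assume a: "i + k1 \<le> j" "j + k2 \<le> length es"
  have 1: "take (i+k1) es = take i es @ take k1 (drop i es)" by (simp add: take_add)
  have 2: "take j es = take (i+k1) es @ take (j-(i+k1)) (drop (i+k1) es)"
    using a take_add[of "i+k1" "j-(i+k1)" es] by simp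
  have 3: "take (j+k2) es = take j es @ take k2 (drop j es)" by (simp add: take_add)
  have "es = take (j+k2) es @ drop (j+k2) es" by simp
  then show ?thesis using 1 2 3 by simp
qed

lemma pump0_weight: "i + k1 \<le> j \<Longrightarrow> j + k2 \<le> length es \<Longrightarrow>
  path_weight A es = path_weight A (pump es i k1 j k2 0) + path_weight A (take k1 (drop i es)) + path_weight A (take k2 (drop j es))"
proof -
  assume a: "i + k1 \<le> j" "j + k2 \<le> length es"
  have "path_weight A es = path_weight A (take i es @ take k1 (drop i es) @ take (j - (i + k1)) (drop (i + k1) es) @ take k2 (drop j es) @ drop (j + k2) es)"
    using pump_decomp[OF a] by metis
  then show ?thesis by (simp add: path_weight_def pump_def)
qed

lemma pump0_len: "i + k1 \<le> j \<Longrightarrow> j + k2 \<le> length es \<Longrightarrow> 0 < k1 \<Longrightarrow>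
  length (pump es i k1 j k2 0) < length es"
  by (simp add: pump_def)

theorem lemma2:
  fixes A :: "('q, 'g) wps" and c1 c2 :: "('q, 'g) config" and n :: int and d :: nat
  assumes "is_wps A"
    and "\<exists>es. path_from_to A c1 es c2 \<and> path_weight A es \<ge> n"
    and "d = (LEAST h. \<exists>es. path_from_to A c1 es c2 \<and> path_weight A es \<ge> n \<and> ASH A c1 es = h)"
    and "d \<ge> (card (states A) * card (alphabet A))^2"
  shows "\<exists>es. path_from_to A c1 es c2 \<and> ASH A c1 es = d \<and>
           (\<exists>i k1 j k2. pumpable_pair A c1 es i k1 j k2 \<and>
              path_weight A (take k1 (drop i es)) + path_weight A (take k2 (drop j es)) > 0)"
proof -
  define P where "P es \<longleftrightarrow> path_from_to A c1 es c2 \<and> path_weight A es \<ge> n \<and> ASH A c1 es = d" for es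
  have dle: "d \<le> ASH A c1 es" if "path_from_to A c1 es c2" "path_weight A es \<ge> n" for es
    using assms(3) that by (auto intro: Least_le)
  obtain es0 where "path_from_to A c1 es0 c2" "path_weight A es0 \<ge> n" using assms(2) by blast
  then have "\<exists>h es. path_from_to A c1 es c2 \<and> path_weight A es \<ge> n \<and> ASH A c1 es = h" by blast
  from LeastI_ex[OF this] have "\<exists>es. P es" unfolding P_def assms(3) by blast
  then obtain es where Pes: "P es" and minl: "\<And>es'. P es' \<Longrightarrow> length es \<le> length es'"
    using ex_has_least_nat[of P _ length] by metis
  have pft: "path_from_to A c1 es c2" and wn: "path_weight A es \<ge> n" and ashd: "ASH A c1 es = d"
    using Pes unfolding P_def by auto
  have ic: "is_config A c1" using pft unfolding path_from_to_def is_path_def by auto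
  obtain cs where r: "run A c1 es = Some cs" using pft unfolding path_from_to_def is_path_def by auto
  have lastcs: "last cs = c2" using pft r unfolding path_from_to_def by simp
  obtain i k1 j k2 where pp: "0 < k1" "0 < k2" "i + k1 \<le> j" "j + k2 \<le> length es"
    and gall: "\<forall>m. \<exists>B. goes A c1 (pump es i k1 j k2 m) (last cs) B"
    and g0: "goes A c1 (pump es i k1 j k2 0) (last cs) (Max (set (map (\<lambda>x. length (fst x)) cs)))"
    using exists_pair[OF assms(1) r ic] assms(4) ashd by blast
  have pump: "pumpable_pair A c1 es i k1 j k2"
    unfolding pumpable_pair_def is_path_def using pp gall ic unfolding goes_def by fastforce
  have "path_weight A (take k1 (drop i es)) + path_weight A (take k2 (drop j es)) > 0"
  proof (rule ccontr)
    assume neg: "\<not> ?thesis"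
    define es' where "es' = pump es i k1 j k2 0"
    obtain cs' where r': "run A c1 es' = Some cs'" and l': "last cs' = c2"
      and hb: "\<forall>x\<in>set cs'. length (fst x) \<le> Max (set (map (\<lambda>x. length (fst x)) cs))"
      using g0 lastcs unfolding goes_def es'_def by blast
    have pft': "path_from_to A c1 es' c2" using r' l' ic unfolding path_from_to_def is_path_def by simp
    have w': "path_weight A es' \<ge> n" using pump0_weight[OF pp(3,4), of A] neg wn unfolding es'_def by linarith
    have cs'ne: "cs' \<noteq> []" using run_basic[OF r'] by auto
    have "Max (set (map (\<lambda>x. length (fst x)) cs')) \<le> Max (set (map (\<lambda>x. length (fst x)) cs))"
      using hb cs'ne by (subst Max_le_iff) auto
    then have "ASH A c1 es' \<le> ASH A c1 es"
      using ash_eq[OF r' l'] ash_eq[OF r lastcs] by simp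
    then have "ASH A c1 es' = d" using dle[OF pft' w'] ashd by simp
    then have "P es'" unfolding P_def using pft' w' by simp
    then have "length es \<le> length es'" using minl by blast
    moreover have "length es' < length es" using pump0_len[OF pp(3,4,1)] unfolding es'_def .
    ultimately show False by simp
  qed
  then show ?thesis using pft ashd pump by blast
qed

end
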